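(* Consider the dynamic load balancing game described in the context, where every player follows the best-response algorithm. Then, with $t'=\max_{j\in[m]}\lceil s_j^0/\mu_j\rceil$, for every time $t\ge t'$ the player $i$ who receives the job at time $t$ distributes it among all the servers, i.e., $a_{ij}^t>0$ for all $j\in[m]$ and all $t\ge t'$.
   Context: Dynamic load balancing game: there are $m$ servers with service rates $\mu_j>0$ and $n$ players with job lengths $\lambda_i>0$; let $\lambda_{\max}=\max_i\lambda_i$, and assume $\lambda_{\max}<\sum_{j=1}^m\mu_j$. Time is discrete, $t=0,1,2,\dots$; the state at time $t$ is $s^t=(s_1^t,\dots,s_m^t)$ with $s_j^t\ge0$ the load on server $j$, and $s^0$ is the given initial state. At each time $t$ exactly one player $i$ receives a new job of length $\lambda_i$ and immediately chooses an action $a_i^t$ in the simplex $\{a:\sum_j a_j=1,a_j\ge0\}$, incurring cost $$D_i(a^t,s^t)=\sum_{j=1}^m\lambda_i a_{ij}^t\left(\frac{\lambda_i a_{ij}^t}{2\mu_j}+\frac{s_j^t}{\mu_j}\right),$$ after which the state evolves as $s_j^{t+1}=\max\{0,\ s_j^t+\lambda_i a_{ij}^t-\mu_j\}$ for all $j$. Best-response algorithm: the player $i$ receiving the job at time $t$ observes $s^t$ and chooses $a_i^t$ as the (unique) minimizer of $D_i(a_i,s^t)$ over the simplex (equivalently, the greedy water-filling rule: with servers sorted by $\mu_j/s_j^t$ in decreasing order, put mass on the first $c-1$ servers so that $(\lambda_i a_{ij}^t+s_j^t)/\mu_j$ is equal on them, where $c$ is the smallest index with $\frac{s_c^t}{\mu_c}\ge\frac{\lambda_i+\sum_{k<c}s_k^t}{\sum_{k<c}\mu_k}$,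 or $c=m+1$ if none). *)

theory Defs
  imports Complex_Main
begin

text \<open>Servers are indexed by 0..m-1; actions are functions nat => real,
  relevant only on indices below m.\<close>

definition simplex :: "nat \<Rightarrow> (nat \<Rightarrow> real) set" where
  "simplex m = {a. (\<forall>j<m. a j \<ge> 0) \<and> (\<Sum>j<m. a j) = 1}"

definition cost :: "nat \<Rightarrow> (nat \<Rightarrow> real) \<Rightarrow> real \<Rightarrow> (nat \<Rightarrow> real) \<Rightarrow> (nat \<Rightarrow> real) \<Rightarrow> real" where
  "cost m mu lam a s = (\<Sum>j<m. lam * a j * (lam * a j / (2 * mu j) + s j / mu j))"

definition best_response :: "nat \<Rightarrow> (nat \<Rightarrow> real) \<Rightarrow> real \<Rightarrow> (nat \<Rightarrow> real) \<Rightarrow> (nat \<Rightarrow> real) \<Rightarrow> bool" where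
  "best_response m mu lam s a \<longleftrightarrow>
     a \<in> simplex m \<and> (\<forall>b\<in>simplex m. cost m mu lam a s \<le> cost m mu lam b s)"

end

theory Submission
  imports Defs
begin

lemma sum_two:
  fixes h :: "nat \<Rightarrow> real"
  assumes "j<m" "k<m" "j\<noteq>k" "\<forall>i. i\<noteq>j \<longrightarrow> i\<noteq>k \<longrightarrow> h i = 0"
  shows "(\<Sum>i<m. h i) = h j + h k"
proof -
  have "(\<Sum>i<m. h i) = (\<Sum>i\<in>{j,k}. h i)"
    by (rule sum.mono_neutral_right) (use assms in auto)
  then show ?thesis using assms by simp
qed

lemma kkt:
  assumes mu: "\<forall>j<m. mu j > 0" and L: "L > 0" and br: "best_response m mu L s a"
    and jk: "j<m" "k<m" "a j > 0"
  shows "(L * a j + s j)/mu j \<le> (L * a k + s k)/mu k"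
proof (rule ccontr)
  assume nt: "\<not> ?thesis"
  define D where "D = (L * a j + s j)/mu j - (L * a k + s k)/mu k"
  have D: "D > 0" using nt unfolding D_def by simp
  have jk2: "j \<noteq> k" using D unfolding D_def by auto
  have muj: "mu j > 0" and muk: "mu k > 0" using mu jk by auto
  define C where "C = 1/(2*mu j) + 1/(2*mu k)"
  have C: "C > 0" unfolding C_def using muj muk by (simp add: add_pos_pos)
  define e where "e = min (a j) (D/(2*L*C))"
  have e: "e > 0" unfolding e_def using jk D L C by simp
  have e1: "e \<le> a j" unfolding e_def by simp
  have e2: "e * L * C \<le> D/2"
  proof -
    have "e \<le> D/(2*L*C)" unfolding e_def by simp
    then have "e * (L*C) \<le> D/(2*L*C) * (L*C)" using L C by (intro mult_right_mono) auto
    also have "\<dots> = D/2" using L C by (simp add: field_simps)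
    finally show ?thesis by (simp add: algebra_simps)
  qed
  define b where "b = a(j := a j - e, k := a k + e)"
  have as: "a \<in> simplex m" and opt: "\<forall>b\<in>simplex m. cost m mu L a s \<le> cost m mu L b s"
    using br unfolding best_response_def by auto
  have bj: "b j = a j - e" and bk: "b k = a k + e" and bo: "\<And>i. i\<noteq>j \<Longrightarrow> i\<noteq>k \<Longrightarrow> b i = a i"
    unfolding b_def using jk2 by auto
  have "b \<in> simplex m"
  proof -
    have nn: "\<forall>i<m. b i \<ge> 0"
    proof (intro allI impI)
      fix i assume "i<m"
      then have "a i \<ge> 0" using as unfolding simplex_def by auto
      then show "b i \<ge> 0" using bj bk bo e e1 by (cases "i=j"; cases "i=k") auto
    qed
    have "(\<Sum>i<m. b i) - (\<Sum>i<m. a i) = (\<Sum>i<m. b i - a i)" by (simp add: sum_subtractf)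
    also have "\<dots> = (b j - a j) + (b k - a k)"
      by (rule sum_two) (use jk jk2 bo in auto)
    also have "\<dots> = 0" using bj bk by simp
    finally show ?thesis using nn as unfolding simplex_def by auto
  qed
  then have le: "cost m mu L a s \<le> cost m mu L b s" using opt by auto
  define F where "F = (\<lambda>c i. L * c i * (L * c i / (2 * mu i) + s i / mu i))"
  have "cost m mu L b s - cost m mu L a s = (\<Sum>i<m. F b i - F a i)"
    unfolding cost_def F_def by (simp add: sum_subtractf)
  also have "\<dots> = (F b j - F a j) + (F b k - F a k)"
    by (rule sum_two) (use jk jk2 bo in \<open>auto simp: F_def\<close>)
  also have "\<dots> = e * L * (e * L * C - D)"
    unfolding F_def C_def D_def bj bk using muj muk by (simp add: field_simps)
  also have "\<dots> < 0"
  proof -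
    have "e * L * C - D < 0" using e2 D by linarith
    moreover have "e * L > 0" using e L by simp
    ultimately show ?thesis by (simp add: mult_pos_neg)
  qed
  finally show False using le by simp
qed


lemma maxdiv:
  assumes "(mu::real) > 0"
  shows "max 0 (x - mu) / mu = max 0 (x/mu - 1)"
  using assms by (auto simp: max_def field_simps)

lemma exists_active:
  assumes "a \<in> simplex m"
  shows "\<exists>j<m. a j > 0"
proof (rule ccontr)
  assume "\<not> ?thesis"
  then have "(\<Sum>j<m. a j) \<le> 0" by (intro sum_nonpos) auto
  then show False using assms unfolding simplex_def by auto
qed

lemma stepE:
  assumes mu: "\<forall>j<m. mu j > 0" and L: "L > 0" and br: "best_response m mu L s a"
    and eq: "\<forall>j<m. \<forall>k<m. s j/mu j = s k/mu k"
  shows "\<forall>k<m. a k > 0"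
proof (intro allI impI)
  fix k assume k: "k<m"
  obtain j where j: "j<m" "a j > 0"
    using exists_active br unfolding best_response_def by blast
  show "a k > 0"
  proof (rule ccontr)
    assume nk: "\<not> a k > 0"
    have "a k \<ge> 0" using br k unfolding best_response_def simplex_def by auto
    then have ak: "a k = 0" using nk by simp
    have "(L * a j + s j)/mu j \<le> (L * a k + s k)/mu k" by (rule kkt[OF mu L br j(1) k j(2)])
    moreover have "s k/mu k = s j/mu j" using eq j k by blast
    ultimately have "(L * a j + s j)/mu j \<le> s j/mu j" using ak by simp
    moreover have "(L * a j + s j)/mu j = L * a j / mu j + s j/mu j" by (simp add: add_divide_distrib)
    moreover have "L * a j / mu j > 0" using L j mu by simp
    ultimately show False by linarith
  qed
qed

lemma stepF:
  assumes mu: "\<forall>j<m. mu j > 0" and L: "L > 0" and br: "best_response m mu L s a"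
    and ev: "\<forall>j<m. s' j = max 0 (s j + L * a j - mu j)"
    and act: "\<forall>j<m. a j > 0"
  shows "\<forall>j<m. \<forall>k<m. s' j/mu j = s' k/mu k"
proof (intro allI impI)
  fix j k assume j: "j<m" and k: "k<m"
  have "(L * a j + s j)/mu j \<le> (L * a k + s k)/mu k" using kkt[OF mu L br j k] act j by simp
  moreover have "(L * a k + s k)/mu k \<le> (L * a j + s j)/mu j" using kkt[OF mu L br k j] act k by simp
  ultimately have "(L * a j + s j)/mu j = (L * a k + s k)/mu k" by simp
  moreover have "s' j / mu j = max 0 ((s j + L * a j)/mu j - 1)"
    using ev j maxdiv[of "mu j" "s j + L * a j"] mu by simp
  moreover have "s' k / mu k = max 0 ((s k + L * a k)/mu k - 1)"
    using ev k maxdiv[of "mu k" "s k + L * a k"] mu by simp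
  ultimately show "s' j/mu j = s' k/mu k" by (simp add: ac_simps)
qed

lemma stepG:
  assumes mu: "\<forall>j<m. mu j > 0" and L: "L > 0" and br: "best_response m mu L s a"
    and ev: "\<forall>j<m. s' j = max 0 (s j + L * a j - mu j)"
    and k: "k<m" "\<not> a k > 0" and bnd: "\<forall>j<m. s j/mu j \<le> B" and B: "B \<ge> 1"
  shows "\<forall>j<m. s' j/mu j \<le> B - 1"
proof (intro allI impI)
  fix j assume j: "j<m"
  have "a k \<ge> 0" using br k unfolding best_response_def simplex_def by auto
  then have ak: "a k = 0" using k by simp
  have s': "s' j / mu j = max 0 ((s j + L * a j)/mu j - 1)"
    using ev j maxdiv[of "mu j" "s j + L * a j"] mu by simp
  show "s' j/mu j \<le> B - 1"
  proof (cases "a j > 0")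
    case True
    have "(L * a j + s j)/mu j \<le> (L * a k + s k)/mu k" by (rule kkt[OF mu L br j k(1) True])
    moreover have "s k/mu k \<le> B" using bnd k by blast
    ultimately have "(s j + L * a j)/mu j \<le> B" using ak by (simp add: ac_simps)
    then show ?thesis using s' B by simp
  next
    case False
    have "a j \<ge> 0" using br j unfolding best_response_def simplex_def by auto
    then have "a j = 0" using False by simp
    then show ?thesis using s' B bnd j by simp
  qed
qed

theorem lemma2:
  fixes m n :: nat
    and mu :: "nat \<Rightarrow> real"
    and lam :: "nat \<Rightarrow> real"
    and p :: "nat \<Rightarrow> nat"
    and s :: "nat \<Rightarrow> nat \<Rightarrow> real"
    and a :: "nat \<Rightarrow> nat \<Rightarrow> real"
  assumes mu_pos: "\<forall>j<m. mu j > 0"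
    and n_pos: "n > 0"
    and lam_pos: "\<forall>i<n. lam i > 0"
    and lam_max: "Max (lam ` {..<n}) < (\<Sum>j<m. mu j)"
    and s0_nonneg: "\<forall>j<m. s 0 j \<ge> 0"
    and player: "\<forall>t. p t < n"
    and br: "\<forall>t. best_response m mu (lam (p t)) (s t) (a t)"
    and evol: "\<forall>t. \<forall>j<m. s (Suc t) j = max 0 (s t j + lam (p t) * a t j - mu j)"
  shows "\<forall>t \<ge> Max ((\<lambda>j. nat \<lceil>s 0 j / mu j\<rceil>) ` {..<m}). \<forall>j<m. a t j > 0"
proof -
  define T where "T = Max ((\<lambda>j. nat \<lceil>s 0 j / mu j\<rceil>) ` {..<m})"
  have L: "\<And>t. lam (p t) > 0" using lam_pos player by auto
  have nonneg: "\<And>t j. j<m \<Longrightarrow> s t j / mu j \<ge> 0"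
  proof -
    fix t j assume j: "j<m"
    have "s t j \<ge> 0" using s0_nonneg evol j by (cases t) auto
    moreover have "mu j > 0" using mu_pos j by blast
    ultimately show "s t j / mu j \<ge> 0" by simp
  qed
  define Inv where "Inv t \<longleftrightarrow> (\<forall>j<m. \<forall>k<m. s t j/mu j = s t k/mu k)
       \<or> (\<forall>j<m. s t j/mu j \<le> real T - real t)" for t
  have Ieq: "\<forall>j<m. \<forall>k<m. s t j/mu j = s t k/mu k" if "Inv t" "t \<ge> T" for t
  proof (cases "\<forall>j<m. \<forall>k<m. s t j/mu j = s t k/mu k")
    case False
    then have "\<forall>j<m. s t j/mu j \<le> real T - real t" using that unfolding Inv_def by blast
    then have "\<forall>j<m. s t j/mu j = 0" using nonneg that(2)
    proof (intro allI impI)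
      fix j assume j: "j<m"
      have "real T - real t \<le> 0" using that(2) by simp
      moreover have "s t j/mu j \<le> real T - real t" using \<open>\<forall>j<m. s t j/mu j \<le> real T - real t\<close> j by blast
      ultimately show "s t j/mu j = 0" using nonneg[OF j, of t] by linarith
    qed
    then show ?thesis
    proof (intro allI impI)
      fix j k assume z: "\<forall>j<m. s t j/mu j = 0" and j: "j<m" and k: "k<m"
      have "s t j/mu j = 0" using z j by blast
      moreover have "s t k/mu k = 0" using z k by blast
      ultimately show "s t j/mu j = s t k/mu k" by linarith
    qed
  qed blast
  have inv: "Inv t" for t
  proof (induction t)
    case 0
    have "\<forall>j<m. s 0 j/mu j \<le> real T"
    proof (intro allI impI)
      fix j assume j: "j<m"
      have "s 0 j/mu j \<le> of_int \<lceil>s 0 j / mu j\<rceil>" by (rule le_of_int_ceiling)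
      also have "\<dots> \<le> real (nat \<lceil>s 0 j / mu j\<rceil>)" by simp
      also have "\<dots> \<le> real T" unfolding T_def using j by (intro of_nat_mono Max_ge) auto
      finally show "s 0 j/mu j \<le> real T" .
    qed
    then show ?case unfolding Inv_def by (intro disjI2) simp
  next
    case (Suc t)
    have ev: "\<forall>j<m. s (Suc t) j = max 0 (s t j + lam (p t) * a t j - mu j)" using evol by blast
    show ?case
    proof (cases "\<forall>j<m. a t j > 0")
      case True
      have "\<forall>j<m. \<forall>k<m. s (Suc t) j/mu j = s (Suc t) k/mu k"
        by (rule stepF[OF mu_pos L br[rule_format] ev True])
      then show ?thesis unfolding Inv_def by blast
    next
      case False
      then obtain k where k: "k<m" "\<not> a t k > 0" by auto
      have eqf: "\<not> (\<forall>j<m. \<forall>k<m. s t j/mu j = s t k/mu k)"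
      proof
        assume "\<forall>j<m. \<forall>k<m. s t j/mu j = s t k/mu k"
        then have "\<forall>j<m. a t j > 0" by (rule stepE[OF mu_pos L br[rule_format]])
        with False show False by blast
      qed
      have "t < T"
      proof (rule ccontr)
        assume "\<not> t < T"
        then have "T \<le> t" by simp
        from Ieq[OF Suc this] eqf show False by blast
      qed
      have bnd: "\<forall>j<m. s t j/mu j \<le> real T - real t" using Suc eqf unfolding Inv_def by blast
      have "\<forall>j<m. s (Suc t) j/mu j \<le> (real T - real t) - 1"
        by (rule stepG[OF mu_pos L br[rule_format] ev k bnd]) (use \<open>t<T\<close> in simp)
      then show ?thesis unfolding Inv_def by (intro disjI2) (simp add: algebra_simps)
    qed
  qed
  show ?thesis unfolding T_def[symmetric]
  proof (rule allI, rule impI)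
    fix t assume "T \<le> t"
    then have "\<forall>j<m. \<forall>k<m. s t j/mu j = s t k/mu k" by (rule Ieq[OF inv])
    then show "\<forall>j<m. a t j > 0" by (rule stepE[OF mu_pos L br[rule_format]])
  qed
qed

end
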